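(* Let $H_X\in\mathbb{F}_2^{m_X\times n}$ and $H_Z\in\mathbb{F}_2^{m_Z\times n}$ be the parity-check matrices of a CSS code, with $H_XH_Z^\top=0$ over $\mathbb{F}_2$. Fix an erased set $\mathcal{E}\subseteq\{1,\dots,n\}$ and let $\mathcal{K}=\mathcal{E}^c$ be the set of known qubits. First run dual peeling on $(H_X,\mathcal{K})$ to exhaustion, i.e. until neither dual-peeling rule applies. Then run any amount of primal peeling on the system $H_{Z,\mathcal{E}}x_{\mathcal{E}}=s_x$, which solves some erased coordinates and moves them from $\mathcal{E}$ into $\mathcal{K}$. Then re-running dual-peeling Rule 2 on the resulting matrix with respect to the enlarged known set cannot produce a new fully erased $X$-stabilizer, i.e. a new row $i$ with $d_{\mathcal{K}}(i)=0$.
   Context: Setting: a CSS code on $n$ qubits. On the quantum erasure channel, the qubits in $\mathcal{E}$ are erased and the decoder knows $\mathcal{E}$. To decode $X$ errors one solves $H_{Z,\mathcal{E}}x_{\mathcal{E}}=s_x$, where $s_x$ is the measured syndrome and $H_{Z,\mathcal{E}}$ is the submatrix of $H_Z$ formed by the columns in $\mathcal{E}$. For a row $i$ of (the current, row-reduced) $H_X$, its known-degree is $d_{\mathcal{K}}(i)=\mathrm{wt}(H_{X,i,\mathcal{K}})$, the number of $1$s of row $i$ in the columns indexed by $\mathcal{K}$. Dual peeling modifies $H_X$ by repeatedly applying two rules until neither applies: Rule 1 (known-column weight-2 elimination): if some $j\in\mathcal{K}$ has column weight exactly $2$ in $H_{X,\mathcal{K}}$, with ones in rows $i_1,i_2$,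 delete row $i_2$ and replace row $i_1$ by $H_{X,i_1}\oplus H_{X,i_2}$. Rule 2 (row peeling): if some row $i$ has $d_{\mathcal{K}}(i)=1$, with unique known neighbor $j$, then for every other row $k\neq i$ with $H_{X,kj}=1$, set $H_{X,k}\leftarrow H_{X,k}\oplus H_{X,i}$. A row with $d_{\mathcal{K}}(i)=0$ is a fully erased $X$-stabilizer: its support lies entirely in $\mathcal{E}$. Primal peeling: while some row of $H_{Z}$, restricted to the still-unresolved erased coordinates, has weight one, solve that coordinate from the syndrome equation, mark it known, and substitute its value into the other equations. *)

theory Defs
  imports Main
begin

text \<open>Binary matrices over F_2 are represented as lists of rows; a row is the set
  of column indices (in 0..<n) where it has a 1. Addition of rows over F_2
  is symmetric difference.\<close>

definition row_xor :: "nat set \<Rightarrow> nat set \<Rightarrow> nat set" where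
  "row_xor a b = (a - b) \<union> (b - a)"

definition known_deg :: "nat set \<Rightarrow> nat set \<Rightarrow> nat" where
  "known_deg K r = card (r \<inter> K)"

definition remove_nth :: "nat \<Rightarrow> 'a list \<Rightarrow> 'a list" where
  "remove_nth i xs = take i xs @ drop (Suc i) xs"

definition dual_rule1 :: "nat set \<Rightarrow> nat set list \<Rightarrow> nat set list \<Rightarrow> bool" where
  "dual_rule1 K M M' \<longleftrightarrow>
     (\<exists>j i1 i2. j \<in> K \<and> i1 < length M \<and> i2 < length M \<and> i1 \<noteq> i2 \<and>
        {i. i < length M \<and> j \<in> M ! i} = {i1, i2} \<and>
        M' = remove_nth i2 (M[i1 := row_xor (M ! i1) (M ! i2)]))"

definition dual_rule2 :: "nat set \<Rightarrow> nat set list \<Rightarrow> nat set list \<Rightarrow> bool" where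
  "dual_rule2 K M M' \<longleftrightarrow>
     (\<exists>i j. i < length M \<and> M ! i \<inter> K = {j} \<and>
        M' = map (\<lambda>k. if k \<noteq> i \<and> j \<in> M ! k then row_xor (M ! k) (M ! i) else M ! k)
                 [0..<length M])"

definition dual_step :: "nat set \<Rightarrow> nat set list \<Rightarrow> nat set list \<Rightarrow> bool" where
  "dual_step K M M' \<longleftrightarrow> dual_rule1 K M M' \<or> dual_rule2 K M M'"

text \<open>One primal peeling step on the erased set E: some row of H_Z restricted to
  the still-unresolved erased coordinates has weight one; that coordinate is
  solved and becomes known.\<close>
definition primal_step :: "nat set list \<Rightarrow> nat set \<Rightarrow> nat set \<Rightarrow> bool" where
  "primal_step HZ E E' \<longleftrightarrow> (\<exists>r j. r \<in> set HZ \<and> r \<inter> E = {j} \<and> E' = E - {j})"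

end

theory Submission
  imports Defs
begin

lemma nat_even_aux:
  fixes a b x :: nat
  assumes "even a" "even b" "x \<le> a" "x \<le> b"
  shows "even ((a - x) + (b - x))"
proof -
  have "(a - x) + (b - x) = (a + b) - 2 * x" using assms(3,4) by simp
  moreover have "even (a + b)" using assms(1,2) by simp
  ultimately show ?thesis using assms(3,4) by simp
qed

lemma xor_even:
  assumes "finite A" "finite B" "even (card A)" "even (card B)"
  shows "even (card ((A - B) \<union> (B - A)))"
proof -
  have d: "card ((A - B) \<union> (B - A)) = card (A - B) + card (B - A)"
    by (rule card_Un_disjoint) (use assms in auto)
  have "card (A - B) = card A - card (A \<inter> B)"
    using assms by (metis card_Diff_subset_Int finite_Int)
  moreover have "card (B - A) = card B - card (A \<inter> B)"
    using assms by (metis Int_commute card_Diff_subset_Int finite_Int)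
  moreover have "card (A \<inter> B) \<le> card A" "card (A \<inter> B) \<le> card B"
    using assms by (auto intro: card_mono)
  ultimately show ?thesis using d assms(3,4) nat_even_aux by metis
qed

definition goodinv :: "nat \<Rightarrow> nat set list \<Rightarrow> nat set list \<Rightarrow> bool" where
  "goodinv n HZ M \<longleftrightarrow> (\<forall>r \<in> set M. r \<subseteq> {..<n} \<and> (\<forall>b \<in> set HZ. even (card (r \<inter> b))))"

lemma xor_good:
  assumes "a \<subseteq> {..<n} \<and> (\<forall>b \<in> set HZ. even (card (a \<inter> b)))"
    "c \<subseteq> {..<n} \<and> (\<forall>b \<in> set HZ. even (card (c \<inter> b)))"
  shows "row_xor a c \<subseteq> {..<n} \<and> (\<forall>b \<in> set HZ. even (card (row_xor a c \<inter> b)))"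
proof -
  have fa: "finite a" "finite c" using assms finite_subset by blast+
  show ?thesis
  proof (intro conjI ballI)
    show "row_xor a c \<subseteq> {..<n}" using assms unfolding row_xor_def by auto
  next
    fix b assume b: "b \<in> set HZ"
    have eq: "row_xor a c \<inter> b = ((a \<inter> b) - (c \<inter> b)) \<union> ((c \<inter> b) - (a \<inter> b))"
      unfolding row_xor_def by auto
    have e: "even (card (a \<inter> b))" "even (card (c \<inter> b))" using assms b by blast+
    have f: "finite (a \<inter> b)" "finite (c \<inter> b)" using fa by blast+
    show "even (card (row_xor a c \<inter> b))"
      unfolding eq by (rule xor_even[OF f e])
  qed
qed

lemma set_remove_nth: "set (remove_nth i xs) \<subseteq> set xs"
  unfolding remove_nth_def by (auto dest: in_set_takeD in_set_dropD)

lemma inv_step: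
  assumes "dual_step K M M'" "goodinv n HZ M"
  shows "goodinv n HZ M'"
  using assms(1) unfolding dual_step_def
proof
  assume "dual_rule1 K M M'"
  then obtain j i1 i2 where h: "i1 < length M" "i2 < length M"
    "M' = remove_nth i2 (M[i1 := row_xor (M ! i1) (M ! i2)])"
    unfolding dual_rule1_def by blast
  have g1: "M ! i1 \<subseteq> {..<n} \<and> (\<forall>b\<in>set HZ. even (card (M ! i1 \<inter> b)))"
    using nth_mem[OF h(1)] assms(2) unfolding goodinv_def by blast
  have g2: "M ! i2 \<subseteq> {..<n} \<and> (\<forall>b\<in>set HZ. even (card (M ! i2 \<inter> b)))"
    using nth_mem[OF h(2)] assms(2) unfolding goodinv_def by blast
  have g: "row_xor (M ! i1) (M ! i2) \<subseteq> {..<n} \<and> (\<forall>b \<in> set HZ. even (card (row_xor (M ! i1) (M ! i2) \<inter> b)))"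
    by (rule xor_good[OF g1 g2])
  have "set M' \<subseteq> insert (row_xor (M ! i1) (M ! i2)) (set M)"
  proof -
    have "set (M[i1 := row_xor (M ! i1) (M ! i2)]) \<subseteq> insert (row_xor (M ! i1) (M ! i2)) (set M)"
      by (rule set_update_subset_insert)
    then show ?thesis unfolding h(3) using set_remove_nth by (rule order_trans[rotated])
  qed
  thus ?thesis using g assms(2) unfolding goodinv_def
    by (metis insert_iff subsetD)
next
  assume "dual_rule2 K M M'"
  then obtain i j where h: "i < length M"
     "M' = map (\<lambda>k. if k \<noteq> i \<and> j \<in> M ! k then row_xor (M ! k) (M ! i) else M ! k) [0..<length M]"
    unfolding dual_rule2_def by blast
  show ?thesis unfolding goodinv_def h(2)
  proof
    fix r assume "r \<in> set (map (\<lambda>k. if k \<noteq> i \<and> j \<in> M ! k then row_xor (M ! k) (M ! i) else M ! k) [0..<length M])"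
    then obtain k where k: "k < length M" "r = (if k \<noteq> i \<and> j \<in> M ! k then row_xor (M ! k) (M ! i) else M ! k)"
      by auto
    have gk: "M ! k \<subseteq> {..<n} \<and> (\<forall>b\<in>set HZ. even (card (M ! k \<inter> b)))"
      using nth_mem[OF k(1)] assms(2) unfolding goodinv_def by blast
    have gi: "M ! i \<subseteq> {..<n} \<and> (\<forall>b\<in>set HZ. even (card (M ! i \<inter> b)))"
      using nth_mem[OF h(1)] assms(2) unfolding goodinv_def by blast
    show "r \<subseteq> {..<n} \<and> (\<forall>b\<in>set HZ. even (card (r \<inter> b)))"
      using k(2) xor_good[OF gk gi] gk by (simp split: if_splits)
  qed
qed

lemma inv_steps:
  assumes "(dual_step K)\<^sup>*\<^sup>* M M'" "goodinv n HZ M"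
  shows "goodinv n HZ M'"
  using assms by induction (use inv_step in blast)+

lemma primal_keep:
  assumes "(primal_step HZ)\<^sup>*\<^sup>* E E'" "r \<subseteq> E" "\<forall>b \<in> set HZ. even (card (r \<inter> b))"
  shows "r \<subseteq> E'"
  using assms(1,2)
proof induction
  case base then show ?case by simp
next
  case (step y z)
  then have ry: "r \<subseteq> y" by simp
  from step(2) obtain b j where b: "b \<in> set HZ" "b \<inter> y = {j}" "z = y - {j}"
    unfolding primal_step_def by blast
  have "j \<notin> r"
  proof
    assume "j \<in> r"
    then have "r \<inter> b = {j}" using b ry by auto
    then have "odd (card (r \<inter> b))" by simp
    then show False using assms(3) b(1) by blast
  qed
  then show ?case using ry b by auto
qed

lemma primal_sub:
  assumes "(primal_step HZ)\<^sup>*\<^sup>* E E'"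
  shows "E' \<subseteq> E"
  using assms by induction (auto simp: primal_step_def)

theorem lemma1:
  fixes n :: nat and HX HZ :: "nat set list" and E E' :: "nat set" and M :: "nat set list"
  assumes HX_rows: "\<forall>r \<in> set HX. r \<subseteq> {..<n}"
    and HZ_rows: "\<forall>r \<in> set HZ. r \<subseteq> {..<n}"
    and CSS: "\<forall>a \<in> set HX. \<forall>b \<in> set HZ. even (card (a \<inter> b))"
    and E_sub: "E \<subseteq> {..<n}"
    and dual_run: "(dual_step ({..<n} - E))\<^sup>*\<^sup>* HX M"
    and dual_exhausted: "\<not> (\<exists>M'. dual_step ({..<n} - E) M M')"
    and primal_run: "(primal_step HZ)\<^sup>*\<^sup>* E E'"
  shows "(\<forall>M2 M3. (dual_rule2 ({..<n} - E'))\<^sup>*\<^sup>* M M2 \<and> dual_rule2 ({..<n} - E') M2 M3 \<longrightarrow>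
            (\<forall>i < length M3. known_deg ({..<n} - E') (M3 ! i) = 0 \<longrightarrow>
                             known_deg ({..<n} - E') (M2 ! i) = 0))
       \<and> (\<forall>M2. (dual_rule2 ({..<n} - E'))\<^sup>*\<^sup>* M M2 \<longrightarrow>
            (\<forall>i < length M2. known_deg ({..<n} - E') (M2 ! i) = 0 \<longrightarrow>
                             known_deg ({..<n} - E') (M ! i) = 0))"
proof -
  let ?K = "{..<n} - E" and ?K' = "{..<n} - E'"
  have "goodinv n HZ HX" using HX_rows CSS unfolding goodinv_def by auto
  then have invM: "goodinv n HZ M" using inv_steps dual_run by blast
  have no1: "\<not> (M ! i \<inter> ?K = {j})" if "i < length M" for i j
  proof
    assume "M ! i \<inter> ?K = {j}"
    then have "dual_rule2 ?K M (map (\<lambda>k. if k \<noteq> i \<and> j \<in> M ! k then row_xor (M ! k) (M ! i) else M ! k) [0..<length M])"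
      unfolding dual_rule2_def using that by blast
    then show False using dual_exhausted unfolding dual_step_def by blast
  qed
  have EE: "E' \<subseteq> E" using primal_sub primal_run by blast
  have noM: "\<not> dual_rule2 ?K' M M3" for M3
  proof
    assume "dual_rule2 ?K' M M3"
    then obtain i j where ij: "i < length M" "M ! i \<inter> ?K' = {j}"
      unfolding dual_rule2_def by blast
    let ?r = "M ! i"
    have rgood: "?r \<subseteq> {..<n}" "\<forall>b \<in> set HZ. even (card (?r \<inter> b))"
      using invM ij(1) unfolding goodinv_def by (meson nth_mem)+
    have sub: "?r \<inter> ?K \<subseteq> {j}" using ij(2) EE by blast
    have "?r \<inter> ?K \<noteq> {j}" using no1 ij(1) by blast
    then have "?r \<inter> ?K = {}" using sub by blast
    then have "?r \<subseteq> E" using rgood(1) by blast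
    then have "?r \<subseteq> E'" using primal_keep[OF primal_run _ rgood(2)] by blast
    then show False using ij(2) by blast
  qed
  have same: "M2 = M" if "(dual_rule2 ?K')\<^sup>*\<^sup>* M M2" for M2
    using that
  proof (induction rule: rtranclp_induct)
    case base then show ?case by simp
  next
    case (step y z) then show ?case using noM by blast
  qed
  show ?thesis using same noM by blast
qed

end
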